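(* Let $(M,\le)$ be a finite ordered monoid, $G\subseteq M$ a generating set and $eval:G^*\to M$ the natural evaluation morphism. Suppose there are words $u,v,w_1,w_2\in G^*$ such that (i) $u=w_1w_2$; (ii) $v$ is a shuffle of $w_1$ and $w_2$; (iii) $eval(u)$ is idempotent; (iv) $eval(uvu)\not\le eval(u)$. Then $N^1(M)=\Omega(n)$.
   Context: $v$ is a shuffle of $w_1$ and $w_2$ if there exist $k\ge0$ and words $w_{1,1},\dots,w_{1,k},w_{2,1},\dots,w_{2,k}\in G^*$ (possibly empty) with $w_1=w_{1,1}\cdots w_{1,k}$, $w_2=w_{2,1}\cdots w_{2,k}$ and $v=w_{1,1}w_{2,1}w_{1,2}w_{2,2}\cdots w_{1,k}w_{2,k}$. An element $e$ is idempotent if $ee=e$. A finite ordered monoid is a finite monoid with a partial order such that $x\le y\Rightarrow zx\le zy$ and $xz\le yz$. Non-deterministic communication complexity: for $f:X\times Y\to\{0,1\}$, $N^1(f)$ is the minimum cost of a non-deterministic protocol for $f$; equivalently, up to an additive constant 2, $N^1(f)=\log_2 C^1(f)$, where $C^1(f)$ is the minimum number of rectangles $S\times T$ on which $f\equiv1$ whose union is $f^{-1}(1)$. An order ideal is a subset $I\subseteq M$ with $y\in I, x\le y\Rightarrow x\in I$. For an order ideal $I$, $N^1(M,I)(n)$ is $N^1$ of the function where Alice receives $m_1,m_3,\dots,m_{2n-1}\in M$, Bob receives $m_2,\dots,m_{2n}\in M$, with value $1$ iff $m_1\cdots m_{2n}\in I$; $N^1(M)(n)=\max_I N^1(M,I)(n)$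 over all order ideals. Asymptotics are as $n\to\infty$. *)

theory Defs
  imports Main "HOL-Library.Landau_Symbols"
begin

definition ordered_monoid :: "('m::{monoid_mult,order}) itself \<Rightarrow> bool" where
  "ordered_monoid _ \<longleftrightarrow> (\<forall>x y z::'m. x \<le> y \<longrightarrow> z * x \<le> z * y \<and> x * z \<le> y * z)"

definition generates :: "('m::monoid_mult) set \<Rightarrow> bool" where
  "generates G \<longleftrightarrow> (\<forall>m::'m. \<exists>w. set w \<subseteq> G \<and> prod_list w = m)"

definition is_shuffle :: "'a list \<Rightarrow> 'a list \<Rightarrow> 'a list \<Rightarrow> bool" where
  "is_shuffle v w1 w2 \<longleftrightarrow> (\<exists>ps qs. length ps = length qs \<and> w1 = concat ps \<and> w2 = concat qs
       \<and> v = concat (map (\<lambda>(a,b). a @ b) (zip ps qs)))"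

definition order_ideal :: "('m::order) set \<Rightarrow> bool" where
  "order_ideal I \<longleftrightarrow> (\<forall>x y. y \<in> I \<longrightarrow> x \<le> y \<longrightarrow> x \<in> I)"

definition one_rect :: "('x \<Rightarrow> 'y \<Rightarrow> bool) \<Rightarrow> 'x set \<Rightarrow> 'y set \<Rightarrow> 'x set \<Rightarrow> 'y set \<Rightarrow> bool" where
  "one_rect f X Y S T \<longleftrightarrow> S \<subseteq> X \<and> T \<subseteq> Y \<and> (\<forall>x\<in>S. \<forall>y\<in>T. f x y)"

definition cover_number :: "('x \<Rightarrow> 'y \<Rightarrow> bool) \<Rightarrow> 'x set \<Rightarrow> 'y set \<Rightarrow> nat" where
  "cover_number f X Y = (LEAST k. \<exists>R. finite R \<and> card R = k \<and>
      (\<forall>(S,T)\<in>R. one_rect f X Y S T) \<and>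
      (\<Union>(S,T)\<in>R. S \<times> T) = {(x,y). x \<in> X \<and> y \<in> Y \<and> f x y})"

text \<open>Non-deterministic complexity, taken as log2 of the cover number (equal to N^1 up to an
  additive constant 2, which is irrelevant for the asymptotic claim).\<close>
definition N1 :: "('x \<Rightarrow> 'y \<Rightarrow> bool) \<Rightarrow> 'x set \<Rightarrow> 'y set \<Rightarrow> real" where
  "N1 f X Y = log 2 (real (cover_number f X Y))"

text \<open>Alice holds m1,m3,..., Bob holds m2,m4,...; the product is m1 m2 ... m(2n).\<close>
definition interleave_prod :: "('m::monoid_mult) list \<Rightarrow> 'm list \<Rightarrow> 'm" where
  "interleave_prod xs ys = prod_list (concat (map (\<lambda>(a,b). [a,b]) (zip xs ys)))"

definition N1_ideal :: "('m::{monoid_mult,order}) set \<Rightarrow> nat \<Rightarrow> real" where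
  "N1_ideal I n = N1 (\<lambda>xs ys. interleave_prod xs ys \<in> I)
                     {xs. length xs = n} {ys. length ys = n}"

definition N1_monoid :: "('m::{monoid_mult,order,finite}) itself \<Rightarrow> nat \<Rightarrow> real" where
  "N1_monoid _ n = Max ((\<lambda>I::'m set. N1_ideal I n) ` {I. order_ideal I})"

end

theory Submission
  imports Defs
begin

fun ic :: "bool list \<Rightarrow> bool list \<Rightarrow> nat" where
  "ic (x#xs) (y#ys) = (if x \<and> y then 1 else 0) + ic xs ys"
| "ic _ _ = 0"

definition DP :: "bool list set \<Rightarrow> bool list set \<Rightarrow> (bool list \<times> bool list) set" where
  "DP A B = {(a,b). a \<in> A \<and> b \<in> B \<and> ic a b = 0}"

definition L :: "nat \<Rightarrow> bool list set" where "L n = {xs. length xs = n}"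

lemma finite_L: "finite (L n)"
  unfolding L_def using finite_lists_length_eq[of "UNIV :: bool set" n] by simp

lemma finite_DP: "A \<subseteq> L n \<Longrightarrow> B \<subseteq> L n \<Longrightarrow> finite (DP A B)"
  by (rule finite_subset[of _ "L n \<times> L n"]) (auto simp: DP_def finite_L)

lemma L_Suc_split: "xs \<in> L (Suc n) \<Longrightarrow> \<exists>x ys. xs = x # ys \<and> ys \<in> L n"
  unfolding L_def by (cases xs) auto

lemma DP_decomp:
  assumes "A \<subseteq> L (Suc n)" "B \<subseteq> L (Suc n)"
  shows "card (DP A B) = card (DP {a. False#a \<in> A} {b. False#b \<in> B})
     + card (DP {a. True#a \<in> A} {b. False#b \<in> B}) + card (DP {a. False#a \<in> A} {b. True#b \<in> B})"
proof -
  let ?A0 = "{a. False#a \<in> A}" and ?A1 = "{a. True#a \<in> A}"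
  let ?B0 = "{b. False#b \<in> B}" and ?B1 = "{b. True#b \<in> B}"
  have A0: "?A0 \<subseteq> L n" "?A1 \<subseteq> L n" "?B0 \<subseteq> L n" "?B1 \<subseteq> L n" using assms by (auto simp: L_def)
  define f00 where "f00 = (\<lambda>(a::bool list,b::bool list). (False#a, False#b))"
  define f10 where "f10 = (\<lambda>(a::bool list,b::bool list). (True#a, False#b))"
  define f01 where "f01 = (\<lambda>(a::bool list,b::bool list). (False#a, True#b))"
  have eq: "DP A B = f00 ` DP ?A0 ?B0 \<union> f10 ` DP ?A1 ?B0 \<union> f01 ` DP ?A0 ?B1"
  proof (rule set_eqI, rule iffI)
    fix p assume "p \<in> DP A B"
    then obtain a b where p: "p = (a,b)" "a \<in> A" "b \<in> B" "ic a b = 0" by (auto simp: DP_def)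
    obtain x a' where a: "a = x#a'" using L_Suc_split p assms by blast
    obtain y b' where b: "b = y#b'" using L_Suc_split p assms by blast
    show "p \<in> f00 ` DP ?A0 ?B0 \<union> f10 ` DP ?A1 ?B0 \<union> f01 ` DP ?A0 ?B1"
      using p a b unfolding f00_def f10_def f01_def DP_def
      by (cases x; cases y) (auto simp: image_iff split: if_splits)
  next
    fix p assume "p \<in> f00 ` DP ?A0 ?B0 \<union> f10 ` DP ?A1 ?B0 \<union> f01 ` DP ?A0 ?B1"
    then show "p \<in> DP A B" unfolding f00_def f10_def f01_def DP_def by auto
  qed
  have inj: "inj f00" "inj f10" "inj f01" unfolding f00_def f10_def f01_def inj_def by auto
  have fin: "finite (DP ?A0 ?B0)" "finite (DP ?A1 ?B0)" "finite (DP ?A0 ?B1)"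
    using A0 finite_DP by blast+
  have d1: "f00 ` DP ?A0 ?B0 \<inter> f10 ` DP ?A1 ?B0 = {}" unfolding f00_def f10_def by auto
  have d2: "(f00 ` DP ?A0 ?B0 \<union> f10 ` DP ?A1 ?B0) \<inter> f01 ` DP ?A0 ?B1 = {}"
    unfolding f00_def f10_def f01_def by auto
  have c: "card (f00 ` DP ?A0 ?B0) = card (DP ?A0 ?B0)" "card (f10 ` DP ?A1 ?B0) = card (DP ?A1 ?B0)"
     "card (f01 ` DP ?A0 ?B1) = card (DP ?A0 ?B1)"
    using inj by (simp_all add: card_image inj_on_subset)
  have u1: "card (f00 ` DP ?A0 ?B0 \<union> f10 ` DP ?A1 ?B0) = card (DP ?A0 ?B0) + card (DP ?A1 ?B0)"
    using card_Un_disjoint[OF _ _ d1] fin c by simp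
  show ?thesis unfolding eq
    using card_Un_disjoint[OF _ _ d2] fin c u1 by simp
qed

lemma card_DP_full: "card (DP (L n) (L n)) = 3^n"
proof (induction n)
  case 0
  have "DP (L 0) (L 0) = {([],[])}" by (auto simp: DP_def L_def)
  then show ?case by simp
next
  case (Suc n)
  have e: "{a. x#a \<in> L (Suc n)} = L n" for x by (auto simp: L_def)
  have p2: "(2::nat)^Suc n = 2^n + 2^n" by simp
  show ?case using DP_decomp[of "L (Suc n)" n "L (Suc n)"] Suc by (simp add: e)
qed

lemma KW:
  "A \<subseteq> L n \<Longrightarrow> B \<subseteq> L n \<Longrightarrow> (\<forall>a\<in>A. \<forall>b\<in>B. ic a b \<noteq> 1) \<Longrightarrow> card (DP A B) \<le> 2^n"
proof (induction n arbitrary: A B)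
  case 0
  have "DP A B \<subseteq> {([],[])}" using 0 by (auto simp: DP_def L_def)
  then have "card (DP A B) \<le> card {([]::bool list,[]::bool list)}" by (rule card_mono[rotated]) simp
  then show ?case by simp
next
  case (Suc n)
  let ?A0 = "{a. False#a \<in> A}" and ?A1 = "{a. True#a \<in> A}"
  let ?B0 = "{b. False#b \<in> B}" and ?B1 = "{b. True#b \<in> B}"
  have S: "?A0 \<subseteq> L n" "?A1 \<subseteq> L n" "?B0 \<subseteq> L n" "?B1 \<subseteq> L n" using Suc.prems by (auto simp: L_def)
  have U1: "?A0 \<union> ?A1 \<subseteq> L n" "?B0 \<union> ?B1 \<subseteq> L n" using S by auto
  have uf1: "\<forall>a\<in>?A0 \<union> ?A1. \<forall>b\<in>?B0. ic a b \<noteq> 1"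
  proof (intro ballI)
    fix a b assume "a \<in> ?A0 \<union> ?A1" "b \<in> ?B0"
    then obtain x where "x#a \<in> A" "False#b \<in> B" by auto
    then have "ic (x#a) (False#b) \<noteq> 1" using Suc.prems(3) by blast
    then show "ic a b \<noteq> 1" by simp
  qed
  have uf2: "\<forall>a\<in>?A0. \<forall>b\<in>?B0 \<union> ?B1. ic a b \<noteq> 1"
  proof (intro ballI)
    fix a b assume "a \<in> ?A0" "b \<in> ?B0 \<union> ?B1"
    then obtain y where "False#a \<in> A" "y#b \<in> B" by auto
    then have "ic (False#a) (y#b) \<noteq> 1" using Suc.prems(3) by blast
    then show "ic a b \<noteq> 1" by simp
  qed
  have h1: "card (DP (?A0 \<union> ?A1) ?B0) \<le> 2^n" using Suc.IH[OF U1(1) S(3) uf1] .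
  have h2: "card (DP ?A0 (?B0 \<union> ?B1)) \<le> 2^n" using Suc.IH[OF S(1) U1(2) uf2] .
  let ?X = "DP ?A0 ?B0 \<inter> DP ?A1 ?B0"
  have fin: "finite (DP ?A0 ?B0)" "finite (DP ?A1 ?B0)" "finite (DP ?A0 ?B1)"
     "finite (DP (?A0 \<union> ?A1) ?B0)" "finite (DP ?A0 (?B0 \<union> ?B1))"
    using S U1 finite_DP by blast+
  have c1: "card (DP ?A0 ?B0 \<union> DP ?A1 ?B0) + card ?X = card (DP ?A0 ?B0) + card (DP ?A1 ?B0)"
    using card_Un_Int[OF fin(1) fin(2)] by linarith
  have c2: "card (DP ?A0 ?B0 \<union> DP ?A1 ?B0) \<le> card (DP (?A0 \<union> ?A1) ?B0)"
    by (rule card_mono[OF fin(4)]) (auto simp: DP_def)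
  have disj: "?X \<inter> DP ?A0 ?B1 = {}"
  proof (rule ccontr)
    assume "?X \<inter> DP ?A0 ?B1 \<noteq> {}"
    then obtain a b where "True#a \<in> A" "True#b \<in> B" "ic a b = 0" by (auto simp: DP_def)
    then have "ic (True#a) (True#b) = 1" "True#a \<in> A" "True#b \<in> B" by simp_all
    then show False using Suc.prems(3) by blast
  qed
  have c3: "card ?X + card (DP ?A0 ?B1) = card (?X \<union> DP ?A0 ?B1)"
    using card_Un_disjoint[OF _ _ disj] fin(1,2,3) by simp
  have c4: "card (?X \<union> DP ?A0 ?B1) \<le> card (DP ?A0 (?B0 \<union> ?B1))"
    by (rule card_mono[OF fin(5)]) (auto simp: DP_def)
  have p2: "(2::nat)^Suc n = 2^n + 2^n" by simp
  show ?case using DP_decomp[OF Suc.prems(1,2)] c1 c2 c3 c4 h1 h2 p2 by linarith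
qed


lemma ip_Nil [simp]: "interleave_prod [] ys = 1"
  by (simp add: interleave_prod_def)
lemma ip_Cons [simp]: "interleave_prod (x#xs) (y#ys) = x * y * interleave_prod xs ys"
  by (simp add: interleave_prod_def mult.assoc)

lemma ip_append:
  "length xs = length ys \<Longrightarrow> interleave_prod (xs@xs') (ys@ys') = interleave_prod xs ys * interleave_prod xs' ys'"
proof (induction xs arbitrary: ys)
  case Nil then show ?case by simp
next
  case (Cons x xs) then show ?case by (cases ys) (auto simp: mult.assoc)
qed

lemma ip_one_right: "interleave_prod xs (replicate (length xs) 1) = prod_list xs"
  by (induction xs) auto
lemma ip_one_left: "interleave_prod (replicate (length ys) 1) ys = prod_list ys"
  by (induction ys) auto
lemma ip_ones: "interleave_prod (replicate k 1) (replicate k 1) = (1::'a::monoid_mult)"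
  using ip_one_right[of "replicate k (1::'a)"] by simp

lemma prod_list_concat_gen: "prod_list (concat xss) = prod_list (map prod_list (xss::'a::monoid_mult list list))"
  by (induction xss) auto

lemma prod_shuffle:
  "length ps = length qs \<Longrightarrow>
   prod_list (concat (map (\<lambda>(a,b). a @ b) (zip ps qs))) = interleave_prod (map prod_list ps) (map prod_list (qs::'a::monoid_mult list list))"
proof (induction ps arbitrary: qs)
  case Nil then show ?case by simp
next
  case (Cons p ps) then show ?case by (cases qs) (auto simp: mult.assoc)
qed

lemma ip_concat:
  assumes "\<And>x y. length (fa x) = length (fb y)"
  shows "length as = length bs \<Longrightarrow> interleave_prod (concat (map fa as)) (concat (map fb bs))
     = prod_list (map2 (\<lambda>x y. interleave_prod (fa x) (fb y)) as bs)"
proof (induction as arbitrary: bs)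
  case Nil then show ?case by simp
next
  case (Cons a as) then show ?case using assms by (cases bs) (auto simp: ip_append)
qed

definition blkA :: "'a::monoid_mult list \<Rightarrow> bool \<Rightarrow> 'a list" where
  "blkA Ps x = (if x then replicate (length Ps) 1 @ Ps @ replicate (length Ps) 1
                else Ps @ replicate (length Ps) 1 @ replicate (length Ps) 1)"
definition blkB :: "'a::monoid_mult list \<Rightarrow> bool \<Rightarrow> 'a list" where
  "blkB Qs y = (if y then replicate (length Qs) 1 @ Qs @ replicate (length Qs) 1
                else replicate (length Qs) 1 @ replicate (length Qs) 1 @ Qs)"

lemma len_blkA [simp]: "length (blkA Ps x) = 3 * length Ps" by (simp add: blkA_def)
lemma len_blkB [simp]: "length (blkB Qs x) = 3 * length Qs" by (simp add: blkB_def)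

lemma blk_val:
  assumes "length Ps = length Qs"
  shows "interleave_prod (blkA Ps x) (blkB Qs y) =
     (if x \<and> y then interleave_prod Ps Qs else prod_list Ps * prod_list Qs)"
proof -
  obtain k where k: "length Ps = k" "length Qs = k" using assms by blast
  have r1: "interleave_prod Ps (replicate k 1) = prod_list Ps" using ip_one_right[of Ps] k by simp
  have r2: "interleave_prod (replicate k 1) Qs = prod_list Qs" using ip_one_left[of Qs] k by simp
  show ?thesis
    by (cases x; cases y) (simp_all add: blkA_def blkB_def k ip_append r1 r2 ip_ones)
qed

lemma ic0:
  fixes e V :: "'a::monoid_mult"
  assumes ee: "e * e = e"
  shows "length as = length bs \<Longrightarrow> ic as bs = 0 \<Longrightarrow>
    e * prod_list (map2 (\<lambda>x y. if x \<and> y then V else e) as bs) = e \<and>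
    prod_list (map2 (\<lambda>x y. if x \<and> y then V else e) as bs) * e = e"
proof (induction as arbitrary: bs)
  case Nil then show ?case by simp
next
  case (Cons a as)
  then obtain b bs' where bs: "bs = b # bs'" by (cases bs) auto
  let ?P = "prod_list (map2 (\<lambda>x y. if x \<and> y then V else e) as bs')"
  have IH: "e * ?P = e" "?P * e = e" using Cons bs by (auto split: if_splits)
  have ab: "\<not> (a \<and> b)" using Cons.prems bs by (auto split: if_splits)
  have "e * (e * ?P) = e" by (simp add: mult.assoc[symmetric] ee IH)
  moreover have "e * ?P * e = e" by (simp add: mult.assoc IH ee)
  ultimately show ?case using ab bs by (auto simp: mult.assoc)
qed

lemma ic1:
  fixes e V :: "'a::monoid_mult"
  assumes ee: "e * e = e"
  shows "length as = length bs \<Longrightarrow> ic as bs = 1 \<Longrightarrow>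
    e * prod_list (map2 (\<lambda>x y. if x \<and> y then V else e) as bs) * e = e * V * e"
proof (induction as arbitrary: bs)
  case Nil then show ?case by simp
next
  case (Cons a as)
  then obtain b bs' where bs: "bs = b # bs'" by (cases bs) auto
  let ?P = "prod_list (map2 (\<lambda>x y. if x \<and> y then V else e) as bs')"
  show ?case
  proof (cases "a \<and> b")
    case True
    then have "ic as bs' = 0" using Cons.prems bs by simp
    then have "?P * e = e" using ic0[OF ee, of as bs'] Cons.prems bs by simp
    then show ?thesis using True bs by (simp add: mult.assoc)
  next
    case False
    then have "ic as bs' = 1" using Cons.prems bs by (auto split: if_splits)
    then have "e * ?P * e = e * V * e" using Cons bs by simp
    moreover have h: "(if a \<and> b then V else e) = e" using False by auto
    ultimately show ?thesis using bs by (simp add: h mult.assoc[symmetric] ee)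
  qed
qed


lemma cover_lower:
  fixes f :: "'x \<Rightarrow> 'y \<Rightarrow> bool"
  assumes fX: "finite X" and fY: "finite Y"
    and eA: "\<And>a. a \<in> L n \<Longrightarrow> ea a \<in> X" and eB: "\<And>b. b \<in> L n \<Longrightarrow> eb b \<in> Y"
    and one: "\<And>a b. a \<in> L n \<Longrightarrow> b \<in> L n \<Longrightarrow> ic a b = 0 \<Longrightarrow> f (ea a) (eb b)"
    and zero: "\<And>a b. a \<in> L n \<Longrightarrow> b \<in> L n \<Longrightarrow> ic a b = 1 \<Longrightarrow> \<not> f (ea a) (eb b)"
  shows "3^n \<le> cover_number f X Y * 2^n"
proof -
  let ?P = "\<lambda>k. \<exists>R. finite R \<and> card R = k \<and>
      (\<forall>(S,T)\<in>R. one_rect f X Y S T) \<and>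
      (\<Union>(S,T)\<in>R. S \<times> T) = {(x,y). x \<in> X \<and> y \<in> Y \<and> f x y}"
  let ?O = "{(x,y). x \<in> X \<and> y \<in> Y \<and> f x y}"
  define R0 where "R0 = (\<lambda>(x,y). ({x},{y})) ` ?O"
  have "finite ?O" by (rule finite_subset[of _ "X \<times> Y"]) (auto simp: fX fY)
  then have "finite R0" unfolding R0_def by simp
  moreover have "\<forall>(S,T)\<in>R0. one_rect f X Y S T" unfolding R0_def one_rect_def by auto
  moreover have "(\<Union>(S,T)\<in>R0. S \<times> T) = ?O" unfolding R0_def by auto
  ultimately have "?P (card R0)" by blast
  then have "?P (cover_number f X Y)" unfolding cover_number_def by (rule LeastI)
  then obtain R where R: "finite R" "card R = cover_number f X Y"
     "\<forall>(S,T)\<in>R. one_rect f X Y S T" "(\<Union>(S,T)\<in>R. S \<times> T) = ?O" by blast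
  define D where "D = (\<lambda>r. DP {a\<in>L n. ea a \<in> fst r} {b\<in>L n. eb b \<in> snd r})"
  have sub: "DP (L n) (L n) \<subseteq> (\<Union>r\<in>R. D r)"
  proof
    fix p assume "p \<in> DP (L n) (L n)"
    then obtain a b where p: "p = (a,b)" "a \<in> L n" "b \<in> L n" "ic a b = 0" by (auto simp: DP_def)
    then have "(ea a, eb b) \<in> ?O" using one eA eB by auto
    then obtain S T where "(S,T) \<in> R" "ea a \<in> S" "eb b \<in> T" using R(4) by blast
    then show "p \<in> (\<Union>r\<in>R. D r)" using p unfolding D_def DP_def by force
  qed
  have bnd: "card (D r) \<le> 2^n" if "r \<in> R" for r
  proof -
    obtain S T where r: "r = (S,T)" by (cases r)
    have rect: "one_rect f X Y S T" using R(3) that r by auto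
    show ?thesis unfolding D_def r fst_conv snd_conv
    proof (rule KW)
      show "\<forall>a\<in>{a \<in> L n. ea a \<in> S}. \<forall>b\<in>{b \<in> L n. eb b \<in> T}. ic a b \<noteq> 1"
        using rect zero unfolding one_rect_def by blast
    qed auto
  qed
  have "3^n = card (DP (L n) (L n))" by (simp add: card_DP_full)
  also have "\<dots> \<le> card (\<Union>r\<in>R. D r)"
    by (rule card_mono[OF _ sub]) (use R(1) in \<open>auto simp: D_def intro!: finite_DP[of _ n]\<close>)
  also have "\<dots> \<le> (\<Sum>r\<in>R. card (D r))" by (rule card_UN_le[OF R(1)])
  also have "\<dots> \<le> card R * 2^n" using sum_bounded_above[of R "\<lambda>r. card (D r)" "2^n"] bnd by simp
  finally show ?thesis using R(2) by simp
qed


lemma finite_lists_N: "finite {xs::('m::finite) list. length xs = N}"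
  using finite_lists_length_eq[of "UNIV :: 'm set" N] by simp

theorem mainTheorem9:
  fixes G :: "('m::{monoid_mult,order,finite}) set"
    and u v w1 w2 :: "'m list"
  assumes "ordered_monoid TYPE('m)"
    and "generates G"
    and "set u \<subseteq> G" "set v \<subseteq> G" "set w1 \<subseteq> G" "set w2 \<subseteq> G"
    and "u = w1 @ w2"
    and "is_shuffle v w1 w2"
    and "prod_list u * prod_list u = prod_list u"
    and "\<not> (prod_list (u @ v @ u) \<le> prod_list u)"
  shows "N1_monoid TYPE('m) \<in> \<Omega>(\<lambda>n. real n)"
proof -
  obtain ps qs where sh: "length ps = length qs" "w1 = concat ps" "w2 = concat qs"
    "v = concat (map (\<lambda>(a,b). a @ b) (zip ps qs))" using assms(8) unfolding is_shuffle_def by blast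
  define e where "e = prod_list u"
  define V where "V = prod_list v"
  define Ps where "Ps = map prod_list ps"
  define Qs where "Qs = map prod_list qs"
  define k where "k = length ps"
  have lPQ: "length Ps = length Qs" "length Ps = k" unfolding Ps_def Qs_def k_def using sh by simp_all
  have lQ: "length Qs = k" using lPQ by simp
  have ee: "e * e = e" using assms(9) e_def by simp
  have ePQ: "e = prod_list Ps * prod_list Qs"
    unfolding e_def Ps_def Qs_def using assms(7) sh by (simp add: prod_list_concat_gen)
  have VPQ: "V = interleave_prod Ps Qs" unfolding V_def Ps_def Qs_def using sh prod_shuffle by simp
  have eVe: "\<not> e * V * e \<le> e" using assms(10) unfolding e_def V_def by (simp add: mult.assoc)
  have kpos: "k > 0"
  proof (rule ccontr)
    assume "\<not> k > 0"
    then have "ps = []" "qs = []" using sh(1) k_def by auto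
    then have "V = 1" "e = 1" using VPQ ePQ Ps_def Qs_def by auto
    then show False using eVe by simp
  qed
  define c where "c = 3 * k"
  have cpos: "c > 0" using kpos c_def by simp
  define I where "I = {x::'m. x \<le> e}"
  have oi: "order_ideal I" unfolding order_ideal_def I_def by auto
  have bv: "interleave_prod (blkA Ps x) (blkB Qs y) = (if x \<and> y then V else e)" for x y
    using blk_val[OF lPQ(1)] VPQ ePQ by simp
  have main: "real (N div c - 2) * log 2 (3/2) \<le> N1_monoid TYPE('m) N" if N: "N \<ge> 2 * c" for N
  proof -
    define n where "n = N div c - 2"
    have "2 \<le> N div c" using N cpos by (metis div_le_mono nonzero_mult_div_cancel_right not_gr0)
    then have n2: "n + 2 = N div c" unfolding n_def by simp
    have cn: "c * (n + 2) \<le> N" unfolding n2 by simp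
    define p where "p = N - c * (n + 2)"
    define ea where "ea = (\<lambda>a. blkA Ps False @ concat (map (blkA Ps) a) @ blkA Ps False @ replicate p (1::'m))"
    define eb where "eb = (\<lambda>b. blkB Qs False @ concat (map (blkB Qs) b) @ blkB Qs False @ replicate p (1::'m))"
    have lc: "length (concat (map (blkA Ps) a)) = c * length a" for a
      by (induction a) (auto simp: lPQ(2) c_def)
    have lcb: "length (concat (map (blkB Qs) b)) = c * length b" for b
      by (induction b) (auto simp: lQ c_def)
    have lea: "length (ea a) = N" if "a \<in> L n" for a
      using that cn unfolding ea_def p_def L_def by (simp add: lc lPQ(2) c_def algebra_simps)
    have leb: "length (eb b) = N" if "b \<in> L n" for b
      using that cn unfolding eb_def p_def L_def by (simp add: lcb lPQ c_def algebra_simps lQ)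
    have ipv: "interleave_prod (ea a) (eb b) =
        e * prod_list (map2 (\<lambda>x y. if x \<and> y then V else e) a b) * e"
      if "a \<in> L n" "b \<in> L n" for a b
    proof -
      have la: "length a = length b" using that by (simp add: L_def)
      have lens: "length (blkA Ps x) = length (blkB Qs y)" for x y by (simp add: lPQ)
      have "interleave_prod (concat (map (blkA Ps) a)) (concat (map (blkB Qs) b))
          = prod_list (map2 (\<lambda>x y. if x \<and> y then V else e) a b)"
        using ip_concat[of "blkA Ps" "blkB Qs", OF lens la] by (simp add: bv)
      moreover have l1: "length (blkA Ps False) = length (blkB Qs False)" by (rule lens)
      moreover have l2: "length (concat (map (blkA Ps) a)) = length (concat (map (blkB Qs) b))"
        using lc lcb la by simp
      ultimately show ?thesis unfolding ea_def eb_def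
        by (simp only: ip_append[OF l1] ip_append[OF l2] ip_append[OF l1] ip_ones bv mult.assoc) simp
    qed
    let ?f = "\<lambda>xs ys. interleave_prod xs ys \<in> I"
    have low: "3^n \<le> cover_number ?f {xs. length xs = N} {ys. length ys = N} * 2^n"
    proof (rule cover_lower[where ea = ea and eb = eb])
      show "finite {xs::'m list. length xs = N}" by (rule finite_lists_N)
      show "finite {xs::'m list. length xs = N}" by (rule finite_lists_N)
      show "ea a \<in> {xs. length xs = N}" if "a \<in> L n" for a using lea that by simp
      show "eb b \<in> {xs. length xs = N}" if "b \<in> L n" for b using leb that by simp
      show "interleave_prod (ea a) (eb b) \<in> I" if "a \<in> L n" "b \<in> L n" "ic a b = 0" for a b
      proof -
        have "e * prod_list (map2 (\<lambda>x y. if x \<and> y then V else e) a b) = e"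
          using ic0[OF ee, of a b V] that by (simp add: L_def)
        then show ?thesis using ipv[OF that(1,2)] ee unfolding I_def by simp
      qed
      show "interleave_prod (ea a) (eb b) \<notin> I" if "a \<in> L n" "b \<in> L n" "ic a b = 1" for a b
      proof -
        have "e * prod_list (map2 (\<lambda>x y. if x \<and> y then V else e) a b) * e = e * V * e"
          using ic1[OF ee, of a b V] that by (simp add: L_def)
        then show ?thesis using ipv[OF that(1,2)] eVe unfolding I_def by simp
      qed
    qed
    define cv where "cv = cover_number ?f {xs. length xs = N} {ys. length ys = N}"
    have r: "(3::real)^n \<le> real cv * 2^n" using low unfolding cv_def
      by (metis (mono_tags, lifting) of_nat_le_iff of_nat_mult of_nat_numeral of_nat_power)
    have r2: "((3::real)/2)^n \<le> real cv" using r by (simp add: power_divide field_simps)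
    have pos: "0 < ((3::real)/2)^n" by simp
    have "real n * log 2 (3/2) = log 2 ((3/2)^n)" by (simp add: log_nat_power)
    also have "\<dots> \<le> log 2 (real cv)" using log_mono[OF _ pos r2] by simp
    also have "\<dots> = N1_ideal I N" unfolding N1_ideal_def N1_def cv_def by simp
    also have "\<dots> \<le> N1_monoid TYPE('m) N" unfolding N1_monoid_def
      by (rule Max_ge) (use oi in auto)
    finally show ?thesis unfolding n_def .
  qed
  define C where "C = log 2 (3/2) / (2 * real c)"
  have Cpos: "C > 0" unfolding C_def using cpos by simp
  have ev: "eventually (\<lambda>N. C * norm (real N) \<le> norm (N1_monoid TYPE('m) N)) at_top"
  proof (rule eventually_at_top_linorderI[of "6 * c"])
    fix N assume N: "N \<ge> 6 * c"
    have m: "real (N div c - 2) * log 2 (3/2) \<le> N1_monoid TYPE('m) N" using main N by simp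
    have d6: "N div c \<ge> 6" using N cpos by (metis div_le_mono nonzero_mult_div_cancel_right not_gr0)
    have dm: "N = c * (N div c) + N mod c" by simp
    have md: "N mod c < c" using cpos by simp
    have "real N = real c * real (N div c) + real (N mod c)" using dm
      by (metis of_nat_add of_nat_mult)
    then have "real N < real c * (real (N div c) + 1)" using md by (simp add: algebra_simps)
    moreover have "real (N div c - 2) = real (N div c) - 2" using d6 by simp
    moreover have "real N \<ge> 6 * real c" using N by (metis of_nat_le_iff of_nat_mult of_nat_numeral)
    ultimately have "real N \<le> 2 * real c * real (N div c - 2)" by (simp add: algebra_simps)
    then have "real N / (2 * real c) \<le> real (N div c - 2)" using cpos by (simp add: field_simps)
    moreover have lp: "log 2 (3/2) > (0::real)" by simp
    ultimately have "log 2 (3/2) * (real N / (2 * real c)) \<le> log 2 (3/2) * real (N div c - 2)"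
      by (intro mult_left_mono) auto
    then have "C * real N \<le> N1_monoid TYPE('m) N" using m unfolding C_def by (simp add: field_simps)
    then show "C * norm (real N) \<le> norm (N1_monoid TYPE('m) N)" by simp
  qed
  show ?thesis by (rule landau_omega.bigI[OF Cpos ev])
qed

end
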